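(* Let $n\ge2$. Under the diagonal top-down model on fully heterochronous ranked tree shapes with $n$ leaves, conditionally on the diagonal $(F_{k,k})_{k=0}^{2n-3}$ of the generated $\mathbf{F}$-matrix $F$, the matrix $F$ is uniformly distributed over all $\mathbf{F}$-matrices of fully heterochronous ranked tree shapes with $n$ leaves having that diagonal.
   Context: A fully heterochronous ranked tree shape with $n$ leaves is a rooted full binary tree (every node has out-degree $0$ or $2$), without leaf labels, with $n$ leaves, together with a total ordering of all $2n-1$ nodes (leaves included) such that nodes appear in increasing order along every path from the root to a leaf; the position of a node in this order, numbered $0,\dots,2n-2$, is its rank. Its $\mathbf{F}$-matrix is the $(2n-2)\times(2n-2)$ lower triangular matrix $F$, indices from $0$ to $2n-3$, where for $0\le j\le i$ the entry $F_{i,j}$ is the number of edges from a parent node $v$ to a child node $w$ with rank of $v$ at most $j$ and rank of $w$ larger than $i$ (entries with a negative index are taken to be $0$). The diagonal of such a matrix is a sequence of positive integers with $F_{0,0}=2$, $F_{k,k}=F_{k-1,k-1}\pm1$ and $F_{2n-3,2n-3}=1$; there are $C_{n-1}=\frac1n\binom{2n-2}{n-1}$ such sequences. Diagonal top-down model: first choose the diagonal $(F_{k,k})_{k=0}^{2n-3}$ uniformly at random among all such valid diagonals. Then build the remaining entries row by row: for $k=1,\dots,2n-3$, given rows $0,\dots,k-1$, choose $L\in\{0,\dots,k-1\}$ with probability $(F_{k-1,L}-F_{k-1,L-1})/F_{k-1,k-1}$ and set $F_{k,j}=F_{k-1,j}$ for $j<L$ and $F_{k,j}=F_{k-1,j}-1$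 for $L\le j\le k-1$ (with $F_{k,k}$ the already chosen diagonal entry). Equivalently, the node of rank $k$ is attached as the child end of an edge chosen uniformly at random among the $F_{k-1,k-1}$ edges whose parent has rank at most $k-1$ and whose child has not yet been placed; $L$ is the rank of that parent; the node of rank $k$ is internal if $F_{k,k}=F_{k-1,k-1}+1$ and a leaf otherwise (the last node, of rank $2n-2$, is a leaf attached to the unique remaining edge). *)

theory Defs
  imports "HOL-Probability.Probability"
begin

text \<open>Ranks are identified with nodes: nodes are 0..2n-2, node 0 is the root, and
  par k (for 1 <= k <= 2n-2) is the rank of the parent of node k. Since nodes are totally
  ordered by rank and leaves are unlabelled, a fully heterochronous ranked tree shape is
  exactly such a parent function.\<close>

definition children :: "nat \<Rightarrow> (nat \<Rightarrow> nat) \<Rightarrow> nat \<Rightarrow> nat set" where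
  "children n par v = {k \<in> {1..2*n-2}. par k = v}"

definition is_fh_rts :: "nat \<Rightarrow> (nat \<Rightarrow> nat) \<Rightarrow> bool" where
  "is_fh_rts n par \<longleftrightarrow>
     (\<forall>k\<in>{1..2*n-2}. par k < k) \<and>
     (\<forall>v\<in>{0..2*n-2}. card (children n par v) = 0 \<or> card (children n par v) = 2) \<and>
     card {v\<in>{0..2*n-2}. children n par v = {}} = n"

definition Fmat :: "nat \<Rightarrow> (nat \<Rightarrow> nat) \<Rightarrow> nat \<Rightarrow> nat \<Rightarrow> nat" where
  "Fmat n par i j =
     (if i < 2*n-2 \<and> j \<le> i then card {w \<in> {1..2*n-2}. par w \<le> j \<and> i < w} else 0)"

definition Fmatrices :: "nat \<Rightarrow> (nat \<Rightarrow> nat \<Rightarrow> nat) set" where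
  "Fmatrices n = {Fmat n par | par. is_fh_rts n par}"

definition diag :: "nat \<Rightarrow> (nat \<Rightarrow> nat \<Rightarrow> nat) \<Rightarrow> nat list" where
  "diag n M = map (\<lambda>k. M k k) [0..<2*n-2]"

definition valid_diags :: "nat \<Rightarrow> nat list set" where
  "valid_diags n = {ds. length ds = 2*n-2 \<and> (\<forall>k<2*n-2. ds ! k > 0) \<and> ds ! 0 = 2 \<and>
      (\<forall>k. 1 \<le> k \<and> k < 2*n-2 \<longrightarrow> ds ! k = ds ! (k-1) + 1 \<or> ds ! k + 1 = ds ! (k-1)) \<and>
      ds ! (2*n-3) = 1}"

definition L_choices :: "(nat \<Rightarrow> nat \<Rightarrow> nat) \<Rightarrow> nat \<Rightarrow> nat multiset" where
  "L_choices M k = (\<Sum>L<k. replicate_mset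
      (M (k-1) L - (if L = 0 then 0 else M (k-1) (L-1))) L)"

definition new_row :: "nat list \<Rightarrow> (nat \<Rightarrow> nat \<Rightarrow> nat) \<Rightarrow> nat \<Rightarrow> nat \<Rightarrow> nat \<Rightarrow> nat" where
  "new_row ds M k L j =
     (if j < L then M (k-1) j
      else if j \<le> k-1 then M (k-1) j - 1
      else if j = k then ds ! k else 0)"

fun gen_rows :: "nat list \<Rightarrow> nat \<Rightarrow> (nat \<Rightarrow> nat \<Rightarrow> nat) pmf" where
  "gen_rows ds 0 = return_pmf (\<lambda>i j. if i = 0 \<and> j = 0 then ds ! 0 else 0)"
| "gen_rows ds (Suc k) =
     bind_pmf (gen_rows ds k) (\<lambda>M.
       map_pmf (\<lambda>L. M(Suc k := new_row ds M (Suc k) L)) (pmf_of_multiset (L_choices M (Suc k))))"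

definition diag_top_down :: "nat \<Rightarrow> (nat \<Rightarrow> nat \<Rightarrow> nat) pmf" where
  "diag_top_down n = bind_pmf (pmf_of_set (valid_diags n)) (\<lambda>ds. gen_rows ds (2*n-3))"

end

theory Submission
  imports Defs
begin

definition cap :: "nat list \<Rightarrow> nat \<Rightarrow> nat" where
  "cap ds v = (if v = 0 then 2 else if ds ! v = ds ! (v-1) + 1 then 2 else 0)"

definition cnt :: "(nat \<Rightarrow> nat) \<Rightarrow> nat \<Rightarrow> nat \<Rightarrow> nat" where
  "cnt p k v = card {w\<in>{1..k}. p w = v}"

definition opn :: "nat list \<Rightarrow> (nat \<Rightarrow> nat) \<Rightarrow> nat \<Rightarrow> nat \<Rightarrow> nat" where
  "opn ds p k v = cap ds v - cnt p k v"

definition TT :: "nat list \<Rightarrow> nat \<Rightarrow> (nat \<Rightarrow> nat) set" where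
  "TT ds k = {p. (\<forall>w. w \<notin> {1..k} \<longrightarrow> p w = 0) \<and> (\<forall>w\<in>{1..k}. p w < w) \<and> (\<forall>v. cnt p k v \<le> cap ds v)}"

definition chs :: "nat list \<Rightarrow> (nat \<Rightarrow> nat) \<Rightarrow> nat \<Rightarrow> nat multiset" where
  "chs ds p k = (\<Sum>L\<le>k. replicate_mset (opn ds p k L) L)"

fun PP :: "nat list \<Rightarrow> nat \<Rightarrow> (nat \<Rightarrow> nat) pmf" where
  "PP ds 0 = return_pmf (\<lambda>_. 0)"
| "PP ds (Suc k) = bind_pmf (PP ds k) (\<lambda>p. map_pmf (\<lambda>L. p(Suc k := L)) (pmf_of_multiset (chs ds p k)))"

definition AA :: "nat list \<Rightarrow> nat \<Rightarrow> (nat \<Rightarrow> nat) \<Rightarrow> nat \<Rightarrow> nat \<Rightarrow> nat" where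
  "AA ds k p i j = (if i \<le> k \<and> j \<le> i then (\<Sum>v\<le>j. cap ds v - cnt p i v) else 0)"

fun Cw :: "nat list \<Rightarrow> nat \<Rightarrow> real" where
  "Cw ds 0 = 2"
| "Cw ds (Suc k) = Cw ds k * fact (cap ds (Suc k)) / ds ! k"

lemma fiber_sum:
  assumes "finite W"
  shows "(\<Sum>v\<le>j. card {w\<in>W. f w = v}) = card {w\<in>W. f w \<le> (j::nat)}"
proof (induction j)
  case 0
  then show ?case by simp
next
  case (Suc j)
  have "{w\<in>W. f w \<le> Suc j} = {w\<in>W. f w \<le> j} \<union> {w\<in>W. f w = Suc j}" by auto
  moreover have "card ({w\<in>W. f w \<le> j} \<union> {w\<in>W. f w = Suc j}) = card {w\<in>W. f w \<le> j} + card {w\<in>W. f w = Suc j}"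
    by (rule card_Un_disjoint) (use assms in auto)
  ultimately show ?case using Suc by simp
qed

lemma cnt_upd:
  "cnt (p(Suc k := L)) (Suc k) v = cnt p k v + (if v = L then 1 else 0)"
proof -
  have e: "{w\<in>{1..Suc k}. (p(Suc k := L)) w = v} = {w\<in>{1..k}. p w = v} \<union> (if v = L then {Suc k} else {})"
    by auto
  show ?thesis unfolding cnt_def e
    by (subst card_Un_disjoint) auto
qed

lemma cnt_mono: "i \<le> k \<Longrightarrow> cnt p i v \<le> cnt p k v"
  unfolding cnt_def by (rule card_mono) auto

lemma count_chs_gen:
  "count (\<Sum>L\<le>(m::nat). replicate_mset (f L) L) x = (if x \<le> m then f x else 0)"
  by (induct m) (auto simp: atMost_Suc le_Suc_eq)

lemma size_chs_gen:
  "size (\<Sum>L\<le>(m::nat). replicate_mset (f L) L) = (\<Sum>L\<le>m. f L)"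
  by (induct m) (auto simp: atMost_Suc)

lemma TT_Suc_intro:
  assumes "p \<in> TT ds k" "L \<le> k" "opn ds p k L > 0"
  shows "p(Suc k := L) \<in> TT ds (Suc k)"
  using assms unfolding TT_def opn_def
  by (auto simp: cnt_upd)

lemma TT_Suc_dest:
  assumes "p \<in> TT ds (Suc k)"
  shows "p(Suc k := 0) \<in> TT ds k" "p (Suc k) \<le> k" "opn ds (p(Suc k := 0)) k (p (Suc k)) > 0"
proof -
  let ?q = "p(Suc k := 0)"
  have pe: "p = ?q(Suc k := p (Suc k))" by simp
  have c: "cnt p (Suc k) v = cnt ?q k v + (if v = p (Suc k) then 1 else 0)" for v
    by (subst pe, subst cnt_upd) simp
  show "?q \<in> TT ds k" using assms c unfolding TT_def
    by (auto simp del: fun_upd_apply) (auto, metis le_add1 order_trans)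
  have "p (Suc k) < Suc k" using assms unfolding TT_def by auto
  then show "p (Suc k) \<le> k" by simp
  show "opn ds ?q k (p (Suc k)) > 0" using assms c[of "p (Suc k)"] unfolding TT_def opn_def
    by (auto simp del: fun_upd_apply) (metis Suc_le_eq zero_less_diff)
qed

lemma cnt_upd_low: "i \<le> k \<Longrightarrow> cnt (p(Suc k := L)) i v = cnt p i v"
  unfolding cnt_def by (rule arg_cong[where f=card]) auto

lemma cnt_zero_TT: "p \<in> TT ds k \<Longrightarrow> k \<le> v \<Longrightarrow> cnt p k v = 0"
proof -
  assume p: "p \<in> TT ds k" and kv: "k \<le> v"
  have "{w\<in>{1..k}. p w = v} = {}"
  proof (rule ccontr)
    assume "{w\<in>{1..k}. p w = v} \<noteq> {}"
    then obtain w where w: "w \<in> {1..k}" "p w = v" by auto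
    then have "p w < w" using p unfolding TT_def by auto
    then show False using w kv by auto
  qed
  then show ?thesis unfolding cnt_def by simp
qed

context
  fixes n :: nat and ds :: "nat list"
  assumes n2: "n \<ge> 2" and V: "ds \<in> valid_diags n"
begin

lemma ds_pos: "k < 2*n-2 \<Longrightarrow> ds ! k > 0"
  using V unfolding valid_diags_def by auto

lemma capsum: "k < 2*n-2 \<Longrightarrow> (\<Sum>v\<le>k. cap ds v) = ds ! k + k"
proof (induction k)
  case 0
  then show ?case using V by (simp add: valid_diags_def cap_def)
next
  case (Suc k)
  have "ds ! Suc k = ds ! k + 1 \<or> ds ! Suc k + 1 = ds ! k"
  proof -
    have "\<forall>k. 1 \<le> k \<and> k < 2*n-2 \<longrightarrow> ds ! k = ds ! (k-1) + 1 \<or> ds ! k + 1 = ds ! (k-1)"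
      using V unfolding valid_diags_def by blast
    from this[rule_format, of "Suc k"] Suc.prems show ?thesis by simp
  qed
  then show ?case using Suc by (auto simp: atMost_Suc cap_def)
qed

lemma sum_cnt: "p \<in> TT ds k \<Longrightarrow> i \<le> k \<Longrightarrow> (\<Sum>v\<le>i. cnt p i v) = i"
proof -
  assume p: "p \<in> TT ds k" and ik: "i \<le> k"
  have "(\<Sum>v\<le>i. cnt p i v) = card {w\<in>{1..i}. p w \<le> i}"
    unfolding cnt_def by (rule fiber_sum) simp
  also have "{w\<in>{1..i}. p w \<le> i} = {1..i}"
  proof -
    have "\<And>w. w \<in> {1..i} \<Longrightarrow> p w < w" using p ik unfolding TT_def by auto
    then show ?thesis by force
  qed
  finally show ?thesis by simp
qed

lemma diagA: "p \<in> TT ds k \<Longrightarrow> i \<le> k \<Longrightarrow> k < 2*n-2 \<Longrightarrow> (\<Sum>v\<le>i. cap ds v - cnt p i v) = ds ! i"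
proof -
  assume p: "p \<in> TT ds k" and ik: "i \<le> k" and k: "k < 2*n-2"
  have le: "\<And>v. v\<in>{..i} \<Longrightarrow> cnt p i v \<le> cap ds v"
    using p cnt_mono[OF ik, of p] unfolding TT_def by (metis (no_types, lifting) mem_Collect_eq le_trans)
  have "(\<Sum>v\<le>i. cap ds v - cnt p i v) = (\<Sum>v\<le>i. cap ds v) - (\<Sum>v\<le>i. cnt p i v)"
    by (rule sum_subtractf_nat[OF le])
  also have "\<dots> = ds ! i" using capsum[of i] sum_cnt[OF p ik] ik k by simp
  finally show ?thesis .
qed

lemma sum_opn: "p \<in> TT ds k \<Longrightarrow> k < 2*n-2 \<Longrightarrow> (\<Sum>v\<le>k. opn ds p k v) = ds ! k"
  unfolding opn_def using diagA[of p k k] by simp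

lemma chs_count: "count (chs ds p k) L = (if L \<le> k then opn ds p k L else 0)"
  unfolding chs_def by (rule count_chs_gen)

lemma chs_size: "p \<in> TT ds k \<Longrightarrow> k < 2*n-2 \<Longrightarrow> size (chs ds p k) = ds ! k"
  unfolding chs_def size_chs_gen using sum_opn by simp

lemma chs_ne: "p \<in> TT ds k \<Longrightarrow> k < 2*n-2 \<Longrightarrow> chs ds p k \<noteq> {#}"
proof -
  assume "p \<in> TT ds k" "k < 2*n-2"
  then have "size (chs ds p k) > 0" using chs_size ds_pos by simp
  then show ?thesis by auto
qed

lemma chs_set: "L \<in># chs ds p k \<longleftrightarrow> L \<le> k \<and> opn ds p k L > 0"
  using chs_count[of p k L] by (simp add: count_greater_zero_iff[symmetric] del: count_greater_zero_iff)

lemma PP_support: "k < 2*n-2 \<Longrightarrow> set_pmf (PP ds k) \<subseteq> TT ds k"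
proof (induction k)
  case 0
  then show ?case by (auto simp: TT_def cnt_def)
next
  case (Suc k)
  show ?case
  proof
    fix p' assume "p' \<in> set_pmf (PP ds (Suc k))"
    then obtain p L where p: "p \<in> set_pmf (PP ds k)" and L: "L \<in> set_pmf (pmf_of_multiset (chs ds p k))"
      and p': "p' = p(Suc k := L)" by auto
    have pT: "p \<in> TT ds k" using p Suc by auto
    have "L \<in># chs ds p k" using L chs_ne[OF pT] Suc.prems by simp
    then show "p' \<in> TT ds (Suc k)" using TT_Suc_intro[OF pT] p' chs_set by auto
  qed
qed

lemma TT_zero: "p \<in> TT ds k \<Longrightarrow> p (Suc k) = 0"
  unfolding TT_def by auto

lemma opn_upd:
  assumes "q \<in> TT ds k"
  shows "opn ds (q(Suc k := L)) (Suc k) v = opn ds q k v - (if v = L then 1 else 0)"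
  unfolding opn_def cnt_upd by simp

lemma PP_pmf: "k < 2*n-2 \<Longrightarrow> p \<in> TT ds k \<Longrightarrow>
   pmf (PP ds k) p * (\<Prod>v\<le>k. fact (opn ds p k v)) = Cw ds k"
proof (induction k arbitrary: p)
  case 0
  then have "p = (\<lambda>_. 0)" unfolding TT_def by auto
  then show ?case by (simp add: opn_def cnt_def cap_def)
next
  case (Suc k p')
  define q where "q = p'(Suc k := 0)"
  define L where "L = p' (Suc k)"
  have qT: "q \<in> TT ds k" and Lk: "L \<le> k" and o: "opn ds q k L > 0"
    using TT_Suc_dest[OF Suc.prems(2)] unfolding q_def L_def by auto
  have p': "p' = q(Suc k := L)" unfolding q_def L_def by simp
  have k: "k < 2*n-2" using Suc.prems by simp
  define g where "g = (\<lambda>a. map_pmf (\<lambda>L. a(Suc k := L)) (pmf_of_multiset (chs ds a k)))"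
  have "pmf (PP ds (Suc k)) p' = (\<integral>a. pmf (g a) p' \<partial>measure_pmf (PP ds k))"
    by (simp add: pmf_bind g_def)
  also have "\<dots> = (\<Sum>a\<in>{q}. pmf (g a) p' * pmf (PP ds k) a)"
  proof (rule integral_measure_pmf_real)
    fix a assume a: "a \<in> set_pmf (PP ds k)" "pmf (g a) p' \<noteq> 0"
    then have aT: "a \<in> TT ds k" using PP_support[OF k] by auto
    from a have "p' \<in> set_pmf (g a)" by (simp add: set_pmf_iff)
    then obtain L' where "p' = a(Suc k := L')" unfolding g_def by auto
    then have "q = a(Suc k := 0)" unfolding q_def by simp
    also have "\<dots> = a" using TT_zero[OF aT] by auto
    finally show "a \<in> {q}" by simp
  qed simp
  also have "\<dots> = pmf (g q) p' * pmf (PP ds k) q" by simp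
  also have "pmf (g q) p' = pmf (pmf_of_multiset (chs ds q k)) L"
    unfolding g_def p' by (rule pmf_map_inj') (auto simp: inj_def dest: fun_cong[where x="Suc k"])
  also have "\<dots> = opn ds q k L / ds ! k"
    using chs_ne[OF qT k] chs_size[OF qT k] chs_count[of q k L] Lk by simp
  finally have pm: "pmf (PP ds (Suc k)) p' = opn ds q k L / ds ! k * pmf (PP ds k) q" .
  have IH: "pmf (PP ds k) q * (\<Prod>v\<le>k. fact (opn ds q k v)) = Cw ds k"
    using Suc.IH[OF k qT] .
  have o2: "opn ds p' (Suc k) v = opn ds q k v - (if v = L then 1 else 0)" for v
    unfolding p' by (rule opn_upd[OF qT])
  have oSk: "opn ds p' (Suc k) (Suc k) = cap ds (Suc k)"
    using o2[of "Suc k"] Lk cnt_zero_TT[OF qT, of "Suc k"] by (simp add: opn_def)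
  define R where "R = (\<Prod>v\<in>{..k}-{L}. (fact (opn ds q k v) :: real))"
  have P1: "(\<Prod>v\<le>k. (fact (opn ds q k v) :: real)) = fact (opn ds q k L) * R"
    unfolding R_def using Lk by (subst prod.remove[of _ L]) auto
  have P2: "(\<Prod>v\<le>k. (fact (opn ds p' (Suc k) v) :: real)) = fact (opn ds q k L - 1) * R"
    unfolding R_def using Lk o2 by (subst prod.remove[of _ L]) (auto intro!: prod.cong)
  have P3: "(\<Prod>v\<le>Suc k. (fact (opn ds p' (Suc k) v) :: real)) = fact (opn ds q k L - 1) * R * fact (cap ds (Suc k))"
    using P2 oSk by (simp add: atMost_Suc)
  have fo: "(fact (opn ds q k L) :: real) = opn ds q k L * fact (opn ds q k L - 1)"
    using o by (simp add: fact_reduce)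
  have dpos: "real (ds ! k) > 0" using ds_pos[OF k] by simp
  show ?case unfolding pm P3 Cw.simps IH[symmetric] P1 fo
    using dpos by (simp add: field_simps)
qed

lemma A_step:
  assumes pT: "p \<in> TT ds k" and Lk: "L \<le> k" and o: "opn ds p k L > 0" and k: "Suc k < 2*n-2"
  shows "(AA ds k p)(Suc k := new_row ds (AA ds k p) (Suc k) L) = AA ds (Suc k) (p(Suc k := L))"
proof (rule ext, rule ext)
  fix i j
  have p'T: "p(Suc k := L) \<in> TT ds (Suc k)" by (rule TT_Suc_intro[OF pT Lk o])
  show "((AA ds k p)(Suc k := new_row ds (AA ds k p) (Suc k) L)) i j = AA ds (Suc k) (p(Suc k := L)) i j"
  proof (cases "i \<le> k")
    case True
    then show ?thesis by (simp add: AA_def cnt_upd_low)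
  next
    case False
    note iF = False
    show ?thesis
    proof (cases "i = Suc k")
      case False
      then show ?thesis using iF by (simp add: AA_def)
    next
      case True
      have c: "cap ds v - cnt (p(Suc k := L)) (Suc k) v = opn ds p k v - (if v = L then 1 else 0)" for v
        unfolding opn_def cnt_upd by simp
      have row: "AA ds k p k j = (\<Sum>v\<le>j. opn ds p k v)" if "j \<le> k" for j
        using that by (simp add: AA_def opn_def)
      consider "j < L" | "L \<le> j" "j \<le> k" | "j = Suc k" | "j > Suc k" by linarith
      then show ?thesis
      proof cases
        case 1
        then show ?thesis using True Lk row[of j] by (simp add: new_row_def AA_def c)
      next
        case 2
        have "(\<Sum>v\<le>j. opn ds p k v - (if v = L then 1 else 0)) = (opn ds p k L - 1) + (\<Sum>v\<in>{..j}-{L}. opn ds p k v)"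
          using 2 by (subst sum.remove[of _ L]) (auto intro!: sum.cong)
        also have "\<dots> = (\<Sum>v\<le>j. opn ds p k v) - 1"
          using 2 o by (subst (2) sum.remove[of _ L]) auto
        finally show ?thesis using True 2 row[of j] by (simp add: new_row_def AA_def c)
      next
        case 3
        have "AA ds (Suc k) (p(Suc k := L)) (Suc k) (Suc k) = ds ! Suc k"
          unfolding AA_def using diagA[OF p'T le_refl k] by simp
        then show ?thesis using True 3 Lk by (simp add: new_row_def)
      next
        case 4
        then show ?thesis using True by (simp add: new_row_def AA_def)
      qed
    qed
  qed
qed

lemma Lchoices_eq:
  assumes "p \<in> TT ds k"
  shows "L_choices (AA ds k p) (Suc k) = chs ds p k"
proof -
  have row: "AA ds k p k j = (\<Sum>v\<le>j. opn ds p k v)" if "j \<le> k" for j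
    using that by (simp add: AA_def opn_def)
  have D: "AA ds k p k L - (if L = 0 then 0 else AA ds k p k (L-1)) = opn ds p k L" if "L \<le> k" for L
  proof (cases L)
    case 0
    then show ?thesis using row[of 0] by simp
  next
    case (Suc L')
    then show ?thesis using row[of L] row[of L'] that by simp
  qed
  show ?thesis unfolding L_choices_def chs_def lessThan_Suc_atMost
    by (intro sum.cong refl) (simp only: D atMost_iff diff_Suc_1)
qed

lemma gen_eq: "k < 2*n-2 \<Longrightarrow> gen_rows ds k = map_pmf (AA ds k) (PP ds k)"
proof (induction k)
  case 0
  have "ds ! 0 = 2" using V unfolding valid_diags_def by auto
  then show ?case by (auto simp: AA_def cnt_def cap_def intro!: ext)
next
  case (Suc k)
  have k: "k < 2*n-2" using Suc.prems by simp
  show ?case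
    unfolding gen_rows.simps PP.simps Suc.IH[OF k] bind_map_pmf map_bind_pmf map_pmf_comp
  proof (rule bind_pmf_cong[OF refl])
    fix p assume "p \<in> set_pmf (PP ds k)"
    then have pT: "p \<in> TT ds k" using PP_support[OF k] by auto
    show "map_pmf (\<lambda>L. (AA ds k p)(Suc k := new_row ds (AA ds k p) (Suc k) L))
            (pmf_of_multiset (L_choices (AA ds k p) (Suc k))) =
          map_pmf (\<lambda>x. AA ds (Suc k) (p(Suc k := x))) (pmf_of_multiset (chs ds p k))"
      unfolding Lchoices_eq[OF pT]
    proof (rule map_pmf_cong[OF refl])
      fix L assume "L \<in> set_pmf (pmf_of_multiset (chs ds p k))"
      then have "L \<in># chs ds p k" using chs_ne[OF pT k] by simp
      then have "L \<le> k" "opn ds p k L > 0" using chs_set by auto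
      then show "(AA ds k p)(Suc k := new_row ds (AA ds k p) (Suc k) L) = AA ds (Suc k) (p(Suc k := L))"
        using A_step[OF pT] Suc.prems by simp
    qed
  qed
qed

lemma new_row_distinct:
  assumes pT: "p \<in> TT ds k" and "La < Lb" "Lb \<le> k" and o: "opn ds p k La > 0"
  shows "new_row ds (AA ds k p) (Suc k) La La \<noteq> new_row ds (AA ds k p) (Suc k) Lb La"
proof -
  have "AA ds k p k La = (\<Sum>v\<le>La. opn ds p k v)" using assms by (simp add: AA_def opn_def)
  also have "\<dots> \<ge> opn ds p k La" by (rule member_le_sum) auto
  finally have "AA ds k p k La > 0" using o by simp
  then show ?thesis using assms by (simp add: new_row_def)
qed

lemma AA_inj: "k < 2*n-2 \<Longrightarrow> inj_on (AA ds k) (TT ds k)"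
proof (induction k)
  case 0
  show ?case by (rule inj_onI) (auto simp: TT_def)
next
  case (Suc k)
  have k: "k < 2*n-2" using Suc.prems by simp
  show ?case
  proof (rule inj_onI)
    fix p1 p2 assume p1: "p1 \<in> TT ds (Suc k)" and p2: "p2 \<in> TT ds (Suc k)"
      and eq: "AA ds (Suc k) p1 = AA ds (Suc k) p2"
    define q1 where "q1 = p1(Suc k := 0)"
    define q2 where "q2 = p2(Suc k := 0)"
    define L1 where "L1 = p1 (Suc k)"
    define L2 where "L2 = p2 (Suc k)"
    have q1: "q1 \<in> TT ds k" "L1 \<le> k" "opn ds q1 k L1 > 0"
      using TT_Suc_dest[OF p1] unfolding q1_def L1_def by auto
    have q2: "q2 \<in> TT ds k" "L2 \<le> k" "opn ds q2 k L2 > 0"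
      using TT_Suc_dest[OF p2] unfolding q2_def L2_def by auto
    have e1: "p1 = q1(Suc k := L1)" unfolding q1_def L1_def by simp
    have e2: "p2 = q2(Suc k := L2)" unfolding q2_def L2_def by simp
    have E: "(AA ds k q1)(Suc k := new_row ds (AA ds k q1) (Suc k) L1)
           = (AA ds k q2)(Suc k := new_row ds (AA ds k q2) (Suc k) L2)"
      using eq unfolding e1 e2 A_step[OF q1 Suc.prems] A_step[OF q2 Suc.prems] .
    have "AA ds k q1 i = AA ds k q2 i" for i
    proof (cases "i = Suc k")
      case True
      then show ?thesis by (auto simp: AA_def)
    next
      case False
      then show ?thesis using fun_cong[OF E, of i] by simp
    qed
    then have "AA ds k q1 = AA ds k q2" by auto
    then have qq: "q1 = q2" using Suc.IH[OF k] q1(1) q2(1) by (auto dest: inj_onD)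
    have R: "new_row ds (AA ds k q1) (Suc k) L1 = new_row ds (AA ds k q1) (Suc k) L2"
      using fun_cong[OF E, of "Suc k"] qq by simp
    have "L1 = L2"
    proof (rule ccontr)
      assume "L1 \<noteq> L2"
      then consider "L1 < L2" | "L2 < L1" by linarith
      then show False
      proof cases
        case 1
        then show False using new_row_distinct[OF q1(1) 1 q2(2) q1(3)] fun_cong[OF R, of L1] by simp
      next
        case 2
        then show False using new_row_distinct[OF q1(1) 2 q1(2)] q2(3) qq fun_cong[OF R, of L2] by simp
      qed
    qed
    then show "p1 = p2" using e1 e2 qq by simp
  qed
qed

lemma TT_finite: "finite (TT ds k)"
proof (rule finite_subset)
  show "TT ds k \<subseteq> {f. \<forall>x. (x \<in> {1..k} \<longrightarrow> f x \<in> {..k}) \<and> (x \<notin> {1..k} \<longrightarrow> f x = 0)}"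
    unfolding TT_def by (auto, meson atLeastAtMost_iff less_imp_le_nat order_trans)
  show "finite \<dots>" by (rule finite_set_of_finite_funs) auto
qed

lemma PP_final: "PP ds (2*n-3) = pmf_of_set (TT ds (2*n-3))" and TT_ne: "TT ds (2*n-3) \<noteq> {}"
proof -
  let ?N = "2*n-3"
  have N: "?N < 2*n-2" using n2 by simp
  have d1: "ds ! ?N = 1" using V unfolding valid_diags_def by auto
  have c: "pmf (PP ds ?N) p = Cw ds ?N" if pT: "p \<in> TT ds ?N" for p
  proof -
    have "opn ds p ?N v \<le> 1" if "v \<le> ?N" for v
    proof -
      have "opn ds p ?N v \<le> (\<Sum>v\<le>?N. opn ds p ?N v)" by (rule member_le_sum) (use that in auto)
      then show ?thesis using sum_opn[OF pT N] d1 by simp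
    qed
    then have "(\<Prod>v\<le>?N. (fact (opn ds p ?N v) :: real)) = 1"
      by (intro prod.neutral) (auto simp: le_Suc_eq dest!: bspec, metis One_nat_def fact_0 fact_1 le_SucE le_zero_eq)
    then show ?thesis using PP_pmf[OF N pT] by simp
  qed
  have sup: "set_pmf (PP ds ?N) \<subseteq> TT ds ?N" by (rule PP_support[OF N])
  have s1: "(\<Sum>p\<in>TT ds ?N. pmf (PP ds ?N) p) = 1" by (rule sum_pmf_eq_1[OF TT_finite sup])
  then show ne: "TT ds ?N \<noteq> {}" by auto
  have "(\<Sum>p\<in>TT ds ?N. pmf (PP ds ?N) p) = card (TT ds ?N) * Cw ds ?N" using c by simp
  with s1 have cw: "Cw ds ?N = 1 / card (TT ds ?N)"
    by (metis nonzero_eq_divide_eq mult.commute mult_zero_left zero_neq_one)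
  show "PP ds ?N = pmf_of_set (TT ds ?N)"
  proof (rule pmf_eqI)
    fix p
    show "pmf (PP ds ?N) p = pmf (pmf_of_set (TT ds ?N)) p"
    proof (cases "p \<in> TT ds ?N")
      case True
      then show ?thesis using c cw ne TT_finite by simp
    next
      case False
      then have "pmf (PP ds ?N) p = 0" using sup by (auto simp: set_pmf_iff)
      then show ?thesis using False ne TT_finite by simp
    qed
  qed
qed

lemma gen_final: "gen_rows ds (2*n-3) = pmf_of_set (AA ds (2*n-3) ` TT ds (2*n-3))"
proof -
  have N: "2*n-3 < 2*n-2" using n2 by simp
  show ?thesis unfolding gen_eq[OF N] PP_final
    by (rule map_pmf_of_set_inj[OF AA_inj[OF N] TT_ne TT_finite])
qed

lemma Fmat_eq:
  assumes par_lt: "\<forall>w\<in>{1..2*n-2}. par w < w"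
    and ch: "\<forall>v\<le>2*n-3. card (children n par v) = cap ds v"
    and agree: "\<forall>w\<in>{1..2*n-3}. p w = par w"
  shows "AA ds (2*n-3) p = Fmat n par"
proof (rule ext, rule ext)
  fix i j
  show "AA ds (2*n-3) p i j = Fmat n par i j"
  proof (cases "i \<le> 2*n-3 \<and> j \<le> i")
    case True
    have t: "cap ds v - cnt p i v = card {w\<in>{Suc i..2*n-2}. par w = v}" if "v \<le> j" for v
    proof -
      have "cap ds v = card {k\<in>{1..2*n-2}. par k = v}"
        using ch that True unfolding children_def by auto
      also have "{k\<in>{1..2*n-2}. par k = v} = {w\<in>{1..i}. par w = v} \<union> {w\<in>{Suc i..2*n-2}. par w = v}"
        using True by auto
      also have "card \<dots> = card {w\<in>{1..i}. par w = v} + card {w\<in>{Suc i..2*n-2}. par w = v}"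
        by (rule card_Un_disjoint) auto
      also have "{w\<in>{1..i}. par w = v} = {w\<in>{1..i}. p w = v}" using agree True by auto
      finally show ?thesis unfolding cnt_def by simp
    qed
    have "AA ds (2*n-3) p i j = (\<Sum>v\<le>j. card {w\<in>{Suc i..2*n-2}. par w = v})"
      using True t by (simp add: AA_def)
    also have "\<dots> = card {w\<in>{Suc i..2*n-2}. par w \<le> j}" by (rule fiber_sum) simp
    also have "{w\<in>{Suc i..2*n-2}. par w \<le> j} = {w \<in> {1..2*n-2}. par w \<le> j \<and> i < w}" by auto
    finally show ?thesis using True n2 by (simp add: Fmat_def)
  next
    case False
    then show ?thesis using n2 by (auto simp: AA_def Fmat_def)
  qed
qed

lemma diag_AA: "p \<in> TT ds (2*n-3) \<Longrightarrow> diag n (AA ds (2*n-3) p) = ds"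
proof -
  assume pT: "p \<in> TT ds (2*n-3)"
  have len: "length ds = 2*n-2" using V unfolding valid_diags_def by auto
  show ?thesis unfolding diag_def
  proof (rule nth_equalityI)
    show "length (map (\<lambda>k. AA ds (2*n-3) p k k) [0..<2*n-2]) = length ds" using len by simp
    fix k assume "k < length (map (\<lambda>k. AA ds (2*n-3) p k k) [0..<2*n-2])"
    then have k: "k < 2*n-2" by simp
    then have "AA ds (2*n-3) p k k = ds ! k"
      using diagA[OF pT, of k] n2 by (simp add: AA_def)
    then show "map (\<lambda>k. AA ds (2*n-3) p k k) [0..<2*n-2] ! k = ds ! k" using k by simp
  qed
qed

lemma sup1:
  assumes pT: "p \<in> TT ds (2*n-3)"
  shows "AA ds (2*n-3) p \<in> {F \<in> Fmatrices n. diag n F = ds}"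
proof -
  let ?N = "2*n-3"
  have N: "?N < 2*n-2" using n2 by simp
  have NS: "2*n-2 = Suc ?N" using n2 by simp
  have d1: "ds ! ?N = 1" using V unfolding valid_diags_def by auto
  have so: "(\<Sum>v\<le>?N. opn ds p ?N v) = 1" using sum_opn[OF pT N] d1 by simp
  then obtain r where r: "r \<le> ?N" "opn ds p ?N r > 0"
    by (metis atMost_iff not_gr_zero sum.neutral zero_neq_one)
  have ov: "opn ds p ?N v = (if v = r then 1 else 0)" if "v \<le> ?N" for v
  proof -
    have "(\<Sum>v\<in>{r,v}. opn ds p ?N v) \<le> (\<Sum>v\<le>?N. opn ds p ?N v)"
      by (rule sum_mono2) (use r that in auto)
    moreover have "opn ds p ?N v \<le> 1" using member_le_sum[of v "{..?N}" "opn ds p ?N"] so that by simp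
    ultimately show ?thesis using r so by (cases "v = r") auto
  qed
  define par where "par = p(Suc ?N := r)"
  have chc: "card (children n par v) = cnt p ?N v + (if v = r then 1 else 0)" for v
  proof -
    have "card (children n par v) = cnt (p(Suc ?N := r)) (Suc ?N) v"
      unfolding children_def cnt_def par_def NS by (rule refl)
    then show ?thesis by (simp add: cnt_upd)
  qed
  have cle: "cnt p ?N v \<le> cap ds v" for v using pT unfolding TT_def by auto
  have ch: "card (children n par v) = cap ds v" if "v \<le> ?N" for v
    using chc[of v] ov[OF that] cle[of v] unfolding opn_def by (auto split: if_splits)
  have ch0: "card (children n par v) = 0" if "v > ?N" for v
    using chc[of v] cnt_zero_TT[OF pT, of v] that r by auto
  have plt: "\<forall>w\<in>{1..2*n-2}. par w < w"
    using pT r unfolding TT_def par_def NS by (auto simp: le_Suc_eq)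
  have capv: "cap ds v = 0 \<or> cap ds v = 2" for v unfolding cap_def by auto
  have fin_ch: "finite (children n par v)" for v unfolding children_def by auto
  have cs: "(\<Sum>v\<le>?N. cap ds v) = 2*n-2" using capsum[OF N] d1 n2 by simp
  let ?I = "{v\<in>{..?N}. cap ds v = 2}"
  let ?Z = "{v\<in>{..?N}. cap ds v = 0}"
  have "(\<Sum>v\<le>?N. cap ds v) = (\<Sum>v\<in>?I. cap ds v)"
    by (rule sum.mono_neutral_right) (use capv in \<open>auto, metis neq0_conv\<close>)
  also have "\<dots> = 2 * card ?I" by simp
  finally have cI: "card ?I = n - 1" using cs by simp
  have "card ?I + card ?Z = card {..?N}"
  proof -
    have "v \<in> ?I \<union> ?Z \<longleftrightarrow> v \<in> {..?N}" for v using capv[of v] by auto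
    then have "?I \<union> ?Z = {..?N}" by blast
    moreover have "card (?I \<union> ?Z) = card ?I + card ?Z" by (rule card_Un_disjoint) auto
    ultimately show ?thesis by simp
  qed
  then have cZ: "card ?Z = n - 1" using cI n2 by simp
  have leaves: "{v\<in>{0..2*n-2}. children n par v = {}} = ?Z \<union> {Suc ?N}"
  proof -
    have "children n par v = {} \<longleftrightarrow> card (children n par v) = 0" for v using fin_ch[of v] by simp
    then show ?thesis using ch ch0 NS by (auto simp: le_Suc_eq)
  qed
  have "card {v\<in>{0..2*n-2}. children n par v = {}} = n"
    unfolding leaves using cZ n2 by (subst card_Un_disjoint) auto
  moreover have "\<forall>v\<in>{0..2*n-2}. card (children n par v) = 0 \<or> card (children n par v) = 2"
  proof
    fix v assume "v \<in> {0..2*n-2}"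
    show "card (children n par v) = 0 \<or> card (children n par v) = 2"
      using ch[of v] ch0[of v] capv[of v] by (cases "v \<le> ?N") auto
  qed
  ultimately have fh: "is_fh_rts n par" using plt unfolding is_fh_rts_def by blast
  have "AA ds ?N p = Fmat n par"
  proof (rule Fmat_eq[OF plt])
    show "\<forall>v\<le>?N. card (children n par v) = cap ds v" using ch by blast
    show "\<forall>w\<in>{1..?N}. p w = par w" unfolding par_def by auto
  qed
  then show ?thesis using fh diag_AA[OF pT] unfolding Fmatrices_def by auto
qed

lemma sub1:
  assumes F: "F \<in> {F \<in> Fmatrices n. diag n F = ds}"
  shows "F \<in> AA ds (2*n-3) ` TT ds (2*n-3)"
proof -
  let ?N = "2*n-3"
  have N: "?N < 2*n-2" using n2 by simp
  obtain par where fh: "is_fh_rts n par" and Fp: "F = Fmat n par" and dg: "diag n F = ds"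
    using F unfolding Fmatrices_def by auto
  have plt: "\<forall>w\<in>{1..2*n-2}. par w < w" using fh unfolding is_fh_rts_def by auto
  have Fkk: "Fmat n par k k = ds ! k" if "k < 2*n-2" for k
  proof -
    have "map (\<lambda>k. F k k) [0..<2*n-2] ! k = ds ! k" using dg unfolding diag_def by simp
    then show ?thesis using that Fp by simp
  qed
  have chs_sum: "(\<Sum>v\<le>k. card (children n par v)) = ds ! k + k" if "k \<le> ?N" for k
  proof -
    have "(\<Sum>v\<le>k. card (children n par v)) = card {w\<in>{1..2*n-2}. par w \<le> k}"
      unfolding children_def by (rule fiber_sum) simp
    also have "{w\<in>{1..2*n-2}. par w \<le> k} = {w\<in>{1..2*n-2}. par w \<le> k \<and> k < w} \<union> {1..k}"
    proof (rule set_eqI)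
      fix w
      show "w \<in> {w\<in>{1..2*n-2}. par w \<le> k} \<longleftrightarrow> w \<in> {w\<in>{1..2*n-2}. par w \<le> k \<and> k < w} \<union> {1..k}"
      proof (cases "w \<le> k")
        case True
        show ?thesis
        proof (cases "w \<ge> 1")
          case True
          have w: "w \<in> {1..2*n-2}" using True \<open>w \<le> k\<close> that by auto
          then have "par w < w" using plt by auto
          then show ?thesis using w True \<open>w \<le> k\<close> by auto
        qed auto
      next
        case False
        then show ?thesis by auto
      qed
    qed
    also have "card \<dots> = card {w\<in>{1..2*n-2}. par w \<le> k \<and> k < w} + card {1..k}"
      by (rule card_Un_disjoint) auto
    also have "card {w\<in>{1..2*n-2}. par w \<le> k \<and> k < w} = ds ! k"
      using Fkk[of k] that n2 by (simp add: Fmat_def)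
    finally show ?thesis by simp
  qed
  have ch: "card (children n par v) = cap ds v" if "v \<le> ?N" for v
  proof (cases v)
    case 0
    then show ?thesis using chs_sum[of 0] capsum[of 0] N by simp
  next
    case (Suc v')
    have "(\<Sum>u\<le>v. card (children n par u)) = (\<Sum>u\<le>v. cap ds u)"
      using chs_sum[OF that] capsum[of v] that N by simp
    moreover have "(\<Sum>u\<le>v'. card (children n par u)) = (\<Sum>u\<le>v'. cap ds u)"
      using chs_sum[of v'] capsum[of v'] that N Suc by simp
    ultimately show ?thesis using Suc by simp
  qed
  define p where "p = (\<lambda>w. if w \<in> {1..?N} then par w else 0)"
  have agree: "\<forall>w\<in>{1..?N}. p w = par w" unfolding p_def by simp
  have cnt_le: "cnt p ?N v \<le> cap ds v" for v
  proof (cases "v \<le> ?N")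
    case True
    have "cnt p ?N v \<le> card (children n par v)"
      unfolding cnt_def children_def p_def by (rule card_mono) auto
    then show ?thesis using ch[OF True] by simp
  next
    case False
    have E: "{w\<in>{1..?N}. p w = v} = {}"
    proof (rule ccontr)
      assume "{w\<in>{1..?N}. p w = v} \<noteq> {}"
      then obtain w where w: "w \<in> {1..?N}" "par w = v" unfolding p_def by auto
      then have "par w < w" using plt by auto
      then show False using w False by auto
    qed
    show ?thesis unfolding cnt_def E by simp
  qed
  have pT: "p \<in> TT ds ?N"
    unfolding TT_def using cnt_le plt by (auto simp: p_def)
  have "AA ds ?N p = Fmat n par"
    by (rule Fmat_eq[OF plt]) (use ch agree in auto)
  then show ?thesis using pT Fp by (metis image_eqI)
qed

lemma S_eq: "{F \<in> Fmatrices n. diag n F = ds} = AA ds (2*n-3) ` TT ds (2*n-3)"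
  using sub1 sup1 by blast

lemma supp_G: "set_pmf (gen_rows ds (2*n-3)) = AA ds (2*n-3) ` TT ds (2*n-3)"
  using gen_final TT_ne TT_finite by simp

lemma supp_G_diag: "M \<in> set_pmf (gen_rows ds (2*n-3)) \<Longrightarrow> diag n M = ds"
  using supp_G diag_AA by auto

lemma finite_supp_G: "finite (set_pmf (gen_rows ds (2*n-3)))"
  using supp_G TT_finite by simp

lemma ds_bound: "k < 2*n-2 \<Longrightarrow> ds ! k \<le> k + 2"
proof (induction k)
  case 0
  then show ?case using V unfolding valid_diags_def by auto
next
  case (Suc k)
  have "\<forall>k. 1 \<le> k \<and> k < 2*n-2 \<longrightarrow> ds ! k = ds ! (k-1) + 1 \<or> ds ! k + 1 = ds ! (k-1)"
    using V unfolding valid_diags_def by blast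
  from this[rule_format, of "Suc k"] Suc show ?case by auto
qed

end

lemma valid_finite: "n \<ge> 2 \<Longrightarrow> finite (valid_diags n)"
proof -
  assume n2: "n \<ge> 2"
  have "valid_diags n \<subseteq> {xs. set xs \<subseteq> {..2*n} \<and> length xs = 2*n-2}"
  proof
    fix xs assume xs: "xs \<in> valid_diags n"
    then have len: "length xs = 2*n-2" unfolding valid_diags_def by auto
    have "set xs \<subseteq> {..2*n}"
    proof
      fix x assume "x \<in> set xs"
      then obtain k where k: "k < length xs" "x = xs ! k" by (auto simp: in_set_conv_nth)
      then show "x \<in> {..2*n}" using ds_bound[OF n2 xs, of k] len by auto
    qed
    then show "xs \<in> {xs. set xs \<subseteq> {..2*n} \<and> length xs = 2*n-2}" using len by simp
  qed
  then show ?thesis using finite_subset finite_lists_length_eq[of "{..2*n}"] by blast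
qed

theorem proposition4:
  fixes n :: nat and ds :: "nat list"
  assumes "n \<ge> 2" and "ds \<in> valid_diags n"
  shows "cond_pmf (diag_top_down n) {M. diag n M = ds}
           = pmf_of_set {F \<in> Fmatrices n. diag n F = ds}"
proof -
  note n2 = assms(1) and V = assms(2)
  let ?V = "valid_diags n"
  let ?G = "\<lambda>d. gen_rows d (2*n-3)"
  let ?E = "{M. diag n M = ds}"
  let ?p = "diag_top_down n"
  have fV: "finite ?V" by (rule valid_finite[OF n2])
  have nV: "?V \<noteq> {}" using V by auto
  have p: "?p = bind_pmf (pmf_of_set ?V) ?G" unfolding diag_top_down_def ..
  have off: "x \<notin> set_pmf (?G d)" if "d \<in> ?V" "d \<noteq> ds" "x \<in> ?E" for d x
    using supp_G_diag[OF n2 that(1), of x] that by auto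
  have px: "pmf ?p x = pmf (?G ds) x / real (card ?V)" if "x \<in> ?E" for x
  proof -
    have "pmf ?p x = (\<Sum>d\<in>?V. pmf (?G d) x) / card ?V" unfolding p by (rule pmf_bind_pmf_of_set[OF nV fV])
    also have "(\<Sum>d\<in>?V. pmf (?G d) x) = pmf (?G ds) x"
      by (rule sum.mono_neutral_right[where S="{ds}", simplified]) (use fV V off[OF _ _ that] in \<open>auto simp: set_pmf_iff\<close>)
    finally show ?thesis .
  qed
  have sp: "set_pmf ?p \<inter> ?E = set_pmf (?G ds)"
  proof
    show "set_pmf ?p \<inter> ?E \<subseteq> set_pmf (?G ds)"
    proof
      fix x assume x: "x \<in> set_pmf ?p \<inter> ?E"
      then obtain d where d: "d \<in> ?V" "x \<in> set_pmf (?G d)" unfolding p using fV nV by auto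
      then show "x \<in> set_pmf (?G ds)" using off[of d x] x by (cases "d = ds") auto
    qed
    show "set_pmf (?G ds) \<subseteq> set_pmf ?p \<inter> ?E"
      unfolding p using fV nV V supp_G_diag[OF n2 V] by auto
  qed
  have ne: "set_pmf ?p \<inter> ?E \<noteq> {}" unfolding sp by (rule set_pmf_not_empty)
  have "measure (measure_pmf ?p) ?E = measure (measure_pmf ?p) (?E \<inter> set_pmf ?p)" by (rule measure_Int_set_pmf[symmetric])
  also have "?E \<inter> set_pmf ?p = set_pmf (?G ds)" using sp by blast
  also have "measure (measure_pmf ?p) (set_pmf (?G ds)) = (\<Sum>x\<in>set_pmf (?G ds). pmf ?p x)"
    by (rule measure_measure_pmf_finite[OF finite_supp_G[OF n2 V]])
  also have "\<dots> = (\<Sum>x\<in>set_pmf (?G ds). pmf (?G ds) x) / real (card ?V)"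
    using px supp_G_diag[OF n2 V] by (simp add: sum_divide_distrib)
  also have "(\<Sum>x\<in>set_pmf (?G ds). pmf (?G ds) x) = 1"
    by (rule sum_pmf_eq_1[OF finite_supp_G[OF n2 V] subset_refl])
  finally have mE: "measure (measure_pmf ?p) ?E = 1 / real (card ?V)" .
  have cV: "real (card ?V) > 0" using fV nV by (simp add: card_gt_0_iff)
  have "cond_pmf ?p ?E = ?G ds"
  proof (rule pmf_eqI)
    fix x
    show "pmf (cond_pmf ?p ?E) x = pmf (?G ds) x"
    proof (cases "x \<in> ?E")
      case True
      then show ?thesis using pmf_cond[OF ne] px[OF True] mE cV by simp
    next
      case False
      then have "x \<notin> set_pmf (?G ds)" using supp_G_diag[OF n2 V] by auto
      then show ?thesis using pmf_cond[OF ne] False by (simp add: set_pmf_iff)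
    qed
  qed
  also have "\<dots> = pmf_of_set {F \<in> Fmatrices n. diag n F = ds}"
    unfolding gen_final[OF n2 V] S_eq[OF n2 V] ..
  finally show ?thesis .
qed

end
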